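(* Let $\varrho,\sigma$ be density operators on a finite-dimensional Hilbert space and $\alpha\in(0,1)$ be such that (1) $\overline{D}_\alpha^{\mathrm{test}}(\varrho\|\sigma)<\overline{D}_\alpha^{\mathrm{meas}}(\varrho\|\sigma)$, and (2) $\frac1nD_\alpha^{\mathrm{test}}(\varrho^{\otimes n}\|\sigma^{\otimes n})<\overline{D}_\alpha^{\mathrm{meas}}(\varrho\|\sigma)$ for every $n\in\mathbb N$. Then $\hat D_\alpha^{\mathrm{test}}(\varrho\|\sigma)<\overline{D}_\alpha^{\mathrm{meas}}(\varrho\|\sigma)$.
   Context: For probability vectors $p,q$ and $\alpha\in(0,1)$, $D_\alpha(p\|q)=\frac{1}{\alpha-1}\log\sum_xp(x)^\alpha q(x)^{1-\alpha}$. For a finite-outcome POVM $M$, $\mathcal M(\varrho):=(\operatorname{Tr}M_x\varrho)_x$; $D_\alpha^{\mathrm{meas}}(\varrho\|\sigma):=\sup_MD_\alpha(\mathcal M(\varrho)\|\mathcal M(\sigma))$ and $\overline{D}_\alpha^{\mathrm{meas}}:=\lim_n\frac1nD_\alpha^{\mathrm{meas}}(\varrho^{\otimes n}\|\sigma^{\otimes n})$. A test is an operator $0\le T\le I$; $\mathcal T(X):=(\operatorname{Tr}XT,\operatorname{Tr}X(I-T))$; $D_\alpha^{\mathrm{test}}(\varrho\|\sigma):=\max_{0\le T\le I}D_\alpha(\mathcal T(\varrho)\|\mathcal T(\sigma))$; $\overline{D}_\alpha^{\mathrm{test}}:=\limsup_n\frac1nD_\alpha^{\mathrm{test}}(\varrho^{\otimes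 n}\|\sigma^{\otimes n})$; $\hat D_\alpha^{\mathrm{test}}:=\sup_n\frac1nD_\alpha^{\mathrm{test}}(\varrho^{\otimes n}\|\sigma^{\otimes n})$. *)

theory Defs
  imports "Jordan_Normal_Form.Matrix" "HOL-Library.Extended_Real" "HOL-Library.Liminf_Limsup"
begin

definition mtrace :: "complex mat \<Rightarrow> complex" where
  "mtrace A = (\<Sum>i<dim_row A. A $$ (i,i))"

definition psd :: "nat \<Rightarrow> complex mat \<Rightarrow> bool" where
  "psd d A \<longleftrightarrow> A \<in> carrier_mat d d \<and>
     (\<forall>v \<in> carrier_vec d. let z = (\<Sum>i<d. cnj (v $ i) * (A *\<^sub>v v) $ i) in Im z = 0 \<and> 0 \<le> Re z)"

definition density :: "nat \<Rightarrow> complex mat \<Rightarrow> bool" where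
  "density d \<rho> \<longleftrightarrow> psd d \<rho> \<and> mtrace \<rho> = 1"

definition kron :: "complex mat \<Rightarrow> complex mat \<Rightarrow> complex mat" where
  "kron A B = mat (dim_row A * dim_row B) (dim_col A * dim_col B)
     (\<lambda>(i,j). A $$ (i div dim_row B, j div dim_col B) * B $$ (i mod dim_row B, j mod dim_col B))"

primrec tpow :: "complex mat \<Rightarrow> nat \<Rightarrow> complex mat" where
  "tpow A 0 = 1\<^sub>m 1"
| "tpow A (Suc n) = kron (tpow A n) A"

definition renyi :: "real \<Rightarrow> real list \<Rightarrow> real list \<Rightarrow> ereal" where
  "renyi \<alpha> p q =
     (let s = (\<Sum>x<length p. (p ! x) powr \<alpha> * (q ! x) powr (1 - \<alpha>))
      in if s = 0 then \<infinity> else ereal (ln s / (\<alpha> - 1)))"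

definition povm :: "nat \<Rightarrow> complex mat list \<Rightarrow> bool" where
  "povm d Ms \<longleftrightarrow> (\<forall>M \<in> set Ms. psd d M) \<and> foldr (+) Ms (0\<^sub>m d d) = 1\<^sub>m d"

definition outcome :: "complex mat list \<Rightarrow> complex mat \<Rightarrow> real list" where
  "outcome Ms \<rho> = map (\<lambda>M. Re (mtrace (M * \<rho>))) Ms"

definition D_meas :: "nat \<Rightarrow> real \<Rightarrow> complex mat \<Rightarrow> complex mat \<Rightarrow> ereal" where
  "D_meas d \<alpha> \<rho> \<sigma> = (SUP Ms \<in> {Ms. povm d Ms}. renyi \<alpha> (outcome Ms \<rho>) (outcome Ms \<sigma>))"

definition is_test :: "nat \<Rightarrow> complex mat \<Rightarrow> bool" where
  "is_test d T \<longleftrightarrow> psd d T \<and> psd d (1\<^sub>m d - T)"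

definition D_test :: "nat \<Rightarrow> real \<Rightarrow> complex mat \<Rightarrow> complex mat \<Rightarrow> ereal" where
  "D_test d \<alpha> \<rho> \<sigma> = (SUP T \<in> {T. is_test d T}.
      renyi \<alpha> [Re (mtrace (\<rho> * T)), Re (mtrace (\<rho> * (1\<^sub>m d - T)))]
              [Re (mtrace (\<sigma> * T)), Re (mtrace (\<sigma> * (1\<^sub>m d - T)))])"

definition D_meas_bar :: "nat \<Rightarrow> real \<Rightarrow> complex mat \<Rightarrow> complex mat \<Rightarrow> ereal" where
  "D_meas_bar d \<alpha> \<rho> \<sigma> = lim (\<lambda>n. D_meas (d ^ n) \<alpha> (tpow \<rho> n) (tpow \<sigma> n) / ereal (real n))"

definition D_test_bar :: "nat \<Rightarrow> real \<Rightarrow> complex mat \<Rightarrow> complex mat \<Rightarrow> ereal" where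
  "D_test_bar d \<alpha> \<rho> \<sigma> = limsup (\<lambda>n. D_test (d ^ n) \<alpha> (tpow \<rho> n) (tpow \<sigma> n) / ereal (real n))"

definition D_test_hat :: "nat \<Rightarrow> real \<Rightarrow> complex mat \<Rightarrow> complex mat \<Rightarrow> ereal" where
  "D_test_hat d \<alpha> \<rho> \<sigma> = (SUP n \<in> {1..}. D_test (d ^ n) \<alpha> (tpow \<rho> n) (tpow \<sigma> n) / ereal (real n))"

end

theory Submission
  imports Defs
begin

lemma aux_sup_lt:
  fixes f :: "nat \<Rightarrow> ereal" and L :: ereal
  assumes "limsup f < L" and "\<And>n. n \<ge> 1 \<Longrightarrow> f n < L"
  shows "(SUP n \<in> {1..}. f n) < L"
proof -
  obtain c where c1: "limsup f < ereal c" and c2: "ereal c < L"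
    using ereal_dense2[OF assms(1)] by blast
  have "eventually (\<lambda>n. f n < ereal c) sequentially"
    using Limsup_lessD[OF c1] .
  then obtain N where N: "\<And>n. n \<ge> N \<Longrightarrow> f n < ereal c"
    by (auto simp: eventually_sequentially)
  define m where "m = Max (insert (ereal c) (f ` {1..<N}))"
  have fin: "finite (insert (ereal c) (f ` {1..<N}))" by simp
  have "m \<in> insert (ereal c) (f ` {1..<N})"
    unfolding m_def using fin by (rule Max_in) simp
  then have mL: "m < L" using c2 assms(2) by auto
  have "(SUP n \<in> {1..}. f n) \<le> m"
  proof (rule SUP_least)
    fix n :: nat assume n: "n \<in> {1..}"
    show "f n \<le> m"
    proof (cases "n < N")
      case True
      then have "f n \<in> insert (ereal c) (f ` {1..<N})" using n by auto
      then show ?thesis unfolding m_def using fin by (rule Max_ge[rotated])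
    next
      case False
      then have "f n \<le> ereal c" using N[of n] by simp
      also have "ereal c \<le> m" unfolding m_def using fin by (rule Max_ge) simp
      finally show ?thesis .
    qed
  qed
  then show ?thesis using mL by (rule le_less_trans)
qed

theorem mainTheorem17:
  fixes d :: nat and \<rho> \<sigma> :: "complex mat" and \<alpha> :: real
  assumes "density d \<rho>" and "density d \<sigma>"
    and "0 < \<alpha>" and "\<alpha> < 1"
    and "D_test_bar d \<alpha> \<rho> \<sigma> < D_meas_bar d \<alpha> \<rho> \<sigma>"
    and "\<And>n. n \<ge> 1 \<Longrightarrow> D_test (d ^ n) \<alpha> (tpow \<rho> n) (tpow \<sigma> n) / ereal (real n) < D_meas_bar d \<alpha> \<rho> \<sigma>"
  shows "D_test_hat d \<alpha> \<rho> \<sigma> < D_meas_bar d \<alpha> \<rho> \<sigma>"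
  unfolding D_test_hat_def
  by (rule aux_sup_lt[OF assms(5)[unfolded D_test_bar_def] assms(6)])

end
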